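(* Let $\mathsf G$ be a finite group, $\mathsf M\leqslant \mathsf G$, $\mathsf T\leqslant N_{\mathsf G}(\mathsf M)$ an abelian subgroup and $\mathsf r\in\mathsf T$. Assume that (q) $\mathsf M$ is quasi-simple; (n) $\mathsf r\notin \operatorname{Cent}_{\mathsf G}(\mathsf M)$; and (w) the set $(\mathcal O_{\mathsf r}^{\mathsf G}\cap \mathsf T)\setminus\big((\mathcal O_{\mathsf r}^{\mathsf M}\cap\mathsf T)\cup \operatorname{Cent}_{\mathsf G}(\mathsf M)\big)$ is nonempty. Then the conjugacy class $\mathcal O_{\mathsf r}^{\mathsf G}$ is of type C.
   Context: For a subgroup $H\leqslant G$ and $g\in G$, $\mathcal O_g^H=\{hgh^{-1}:h\in H\}$ is the orbit of $g$ under conjugation by $H$. A finite group is quasi-simple if it is perfect and $H/Z(H)$ is simple (hence non-abelian). A conjugacy class $\mathcal O$ of a finite group $G$ is of type C if there are $H\leqslant G$ and $r,s\in H\cap\mathcal O$ such that $rs\neq sr$, $H=\langle \mathcal O_r^H,\mathcal O_s^H\rangle$, $\mathcal O_r^H\neq\mathcal O_s^H$, and either $\min\{|\mathcal O_r^H|,|\mathcal O_s^H|\}>2$ or $\max\{|\mathcal O_r^H|,|\mathcal O_s^H|\}>4$. *)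

theory Defs
  imports "HOL-Algebra.Algebra"
begin

definition conj_orbit :: "('a, 'b) monoid_scheme \<Rightarrow> 'a set \<Rightarrow> 'a \<Rightarrow> 'a set" where
  "conj_orbit G H g = {h \<otimes>\<^bsub>G\<^esub> g \<otimes>\<^bsub>G\<^esub> inv\<^bsub>G\<^esub> h | h. h \<in> H}"

definition centralizer :: "('a, 'b) monoid_scheme \<Rightarrow> 'a set \<Rightarrow> 'a set" where
  "centralizer G S = {g \<in> carrier G. \<forall>s \<in> S. g \<otimes>\<^bsub>G\<^esub> s = s \<otimes>\<^bsub>G\<^esub> g}"

definition subgroup_center :: "('a, 'b) monoid_scheme \<Rightarrow> 'a set \<Rightarrow> 'a set" where
  "subgroup_center G H = {z \<in> H. \<forall>h \<in> H. z \<otimes>\<^bsub>G\<^esub> h = h \<otimes>\<^bsub>G\<^esub> z}"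

definition quasi_simple :: "('a, 'b) monoid_scheme \<Rightarrow> 'a set \<Rightarrow> bool" where
  "quasi_simple G H \<longleftrightarrow> subgroup H G \<and> derived G H = H \<and>
     simple_group ((G\<lparr>carrier := H\<rparr>) Mod (subgroup_center G H))"

definition type_C :: "('a, 'b) monoid_scheme \<Rightarrow> 'a set \<Rightarrow> bool" where
  "type_C G Cl \<longleftrightarrow> (\<exists>H r s. subgroup H G \<and> r \<in> H \<inter> Cl \<and> s \<in> H \<inter> Cl \<and>
      r \<otimes>\<^bsub>G\<^esub> s \<noteq> s \<otimes>\<^bsub>G\<^esub> r \<and>
      H = generate G (conj_orbit G H r \<union> conj_orbit G H s) \<and>
      conj_orbit G H r \<noteq> conj_orbit G H s \<and>
      (min (card (conj_orbit G H r)) (card (conj_orbit G H s)) > 2 \<or>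
       max (card (conj_orbit G H r)) (card (conj_orbit G H s)) > 4))"

end

theory Submission
  imports Defs
begin

context group begin

lemma cancL[simp]: "x \<in> carrier G \<Longrightarrow> y \<in> carrier G \<Longrightarrow> x \<otimes> (inv x \<otimes> y) = y"
  by (simp add: m_assoc[symmetric])
lemma cancL'[simp]: "x \<in> carrier G \<Longrightarrow> y \<in> carrier G \<Longrightarrow> inv x \<otimes> (x \<otimes> y) = y"
  by (simp add: m_assoc[symmetric])

lemmas gs = m_assoc inv_mult_group

lemma centralizer_subgroup:
  assumes "S \<subseteq> carrier G" shows "subgroup (centralizer G S) G"
proof (rule subgroupI)
  show "centralizer G S \<subseteq> carrier G" unfolding centralizer_def by auto
  show "centralizer G S \<noteq> {}" unfolding centralizer_def using assms by (auto intro!: exI[of _ \<one>])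
  fix a b assume a: "a \<in> centralizer G S" and b: "b \<in> centralizer G S"
  show "inv a \<in> centralizer G S" using a assms unfolding centralizer_def
  proof (clarsimp)
    fix s assume "a \<in> carrier G" "\<forall>s\<in>S. a \<otimes> s = s \<otimes> a" "s \<in> S"
    then have s: "s \<in> carrier G" "a \<otimes> s = s \<otimes> a" using assms by auto
    have "inv a \<otimes> s = inv a \<otimes> (s \<otimes> a) \<otimes> inv a" using s \<open>a \<in> carrier G\<close> by (simp add: m_assoc)
    also have "\<dots> = s \<otimes> inv a" using s \<open>a \<in> carrier G\<close> by (simp add: m_assoc[symmetric] s(2)[symmetric])
    finally show "inv a \<otimes> s = s \<otimes> inv a" .
  qed
  show "a \<otimes> b \<in> centralizer G S" using a b assms unfolding centralizer_def
    by (auto simp: m_assoc) (metis m_assoc subsetD)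
qed

lemma generate_centralizer:
  assumes "A \<subseteq> carrier G" "B \<subseteq> carrier G" "\<forall>a\<in>A. \<forall>b\<in>B. a \<otimes> b = b \<otimes> a"
  shows "\<forall>x\<in>generate G A. \<forall>y\<in>generate G B. x \<otimes> y = y \<otimes> x"
proof -
  have "A \<subseteq> centralizer G B" using assms unfolding centralizer_def by auto
  hence 1: "generate G A \<subseteq> centralizer G B"
    using generate_subgroup_incl centralizer_subgroup assms by blast
  hence "B \<subseteq> centralizer G (generate G A)" using assms unfolding centralizer_def by auto
  hence "generate G B \<subseteq> centralizer G (generate G A)"
    using generate_subgroup_incl centralizer_subgroup generate_incl assms by blast
  thus ?thesis unfolding centralizer_def by auto
qed


lemma norm_conj:
  assumes "M \<subseteq> carrier G" "x \<in> normalizer G M" "m \<in> M"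
  shows "x \<otimes> m \<otimes> inv x \<in> M"
proof -
  have x: "x \<in> carrier G" and e: "x <# M #> inv x = M"
    using assms(1,2) unfolding normalizer_def stabilizer_def by auto
  have "x \<otimes> m \<otimes> inv x \<in> x <# M #> inv x"
    using assms(3) unfolding l_coset_def r_coset_def by auto
  thus ?thesis using e by simp
qed

lemma qs_nonab:
  assumes "quasi_simple G M" shows "\<exists>a\<in>M. \<exists>b\<in>M. a \<otimes> b \<noteq> b \<otimes> a"
proof (rule ccontr)
  assume "\<not> ?thesis"
  hence comm: "\<And>a b. a \<in> M \<Longrightarrow> b \<in> M \<Longrightarrow> a \<otimes> b = b \<otimes> a" by blast
  have sub: "subgroup M G" and der: "derived G M = M"
    and sg: "simple_group ((G\<lparr>carrier := M\<rparr>) Mod (subgroup_center G M))"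
    using assms unfolding quasi_simple_def by auto
  have MG: "M \<subseteq> carrier G" by (rule subgroup.subset[OF sub])
  have "derived_set G M \<subseteq> {\<one>}"
  proof clarify
    fix a b assume ab: "a \<in> M" "b \<in> M"
    hence "a \<in> carrier G" "b \<in> carrier G" using MG by auto
    moreover have "a \<otimes> b \<otimes> inv a \<otimes> inv b = b \<otimes> a \<otimes> inv a \<otimes> inv b" by (subst comm[OF ab]) (rule refl)
    ultimately show "a \<otimes> b \<otimes> inv a \<otimes> inv b = \<one>" by (simp add: m_assoc)
  qed
  hence "generate G (derived_set G M) \<subseteq> {\<one>}" by (rule generate_subgroup_incl[OF _ triv_subgroup])
  hence "M \<subseteq> {\<one>}" using der unfolding derived_def by simp
  hence M1: "M = {\<one>}" using subgroup.one_closed[OF sub] by auto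
  let ?Q = "(G\<lparr>carrier := M\<rparr>) Mod (subgroup_center G M)"
  have "carrier ?Q = {r_coset (G\<lparr>carrier := M\<rparr>) (subgroup_center G M) \<one>}"
    unfolding carrier_FactGroup using M1 by simp
  hence "order ?Q = 1" unfolding order_def by simp
  thus False using simple_group.order_gt_one[OF sg] by simp
qed

lemma orbit_sub: "H \<subseteq> carrier G \<Longrightarrow> x \<in> carrier G \<Longrightarrow> conj_orbit G H x \<subseteq> carrier G"
  unfolding conj_orbit_def by blast

lemma orbit_self: "subgroup H G \<Longrightarrow> x \<in> carrier G \<Longrightarrow> x \<in> conj_orbit G H x"
  unfolding conj_orbit_def using subgroup.one_closed[of H G] by (intro CollectI exI[of _ \<one>]) simp

lemma orbitE: assumes "y \<in> conj_orbit G K x" obtains k where "k \<in> K" "y = k \<otimes> x \<otimes> inv k"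
  using assms unfolding conj_orbit_def by blast
lemma orbitI: "h \<in> K \<Longrightarrow> h \<otimes> x \<otimes> inv h \<in> conj_orbit G K x"
  unfolding conj_orbit_def by blast

lemma orbit_conj:
  assumes "subgroup K G" "x \<in> carrier G" "y \<in> conj_orbit G K x"
  shows "conj_orbit G K y = conj_orbit G K x"
proof -
  obtain k where k: "k \<in> K" "y = k \<otimes> x \<otimes> inv k" using assms(3) by (rule orbitE)
  have kc: "k \<in> carrier G" by (rule subgroup.mem_carrier[OF assms(1) k(1)])
  show ?thesis
  proof
    show "conj_orbit G K y \<subseteq> conj_orbit G K x"
    proof
      fix z assume "z \<in> conj_orbit G K y"
      then obtain h where h: "h \<in> K" "z = h \<otimes> y \<otimes> inv h" by (rule orbitE)
      have hc: "h \<in> carrier G" by (rule subgroup.mem_carrier[OF assms(1) h(1)])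
      have "z = (h \<otimes> k) \<otimes> x \<otimes> inv (h \<otimes> k)" unfolding h(2) k(2) using hc kc assms(2) by (simp add: gs)
      moreover have "h \<otimes> k \<in> K" by (rule subgroup.m_closed[OF assms(1) h(1) k(1)])
      ultimately show "z \<in> conj_orbit G K x" using orbitI[of "h \<otimes> k" K x] by simp
    qed
    show "conj_orbit G K x \<subseteq> conj_orbit G K y"
    proof
      fix z assume "z \<in> conj_orbit G K x"
      then obtain h where h: "h \<in> K" "z = h \<otimes> x \<otimes> inv h" by (rule orbitE)
      have hc: "h \<in> carrier G" by (rule subgroup.mem_carrier[OF assms(1) h(1)])
      have "z = (h \<otimes> inv k) \<otimes> y \<otimes> inv (h \<otimes> inv k)" unfolding h(2) k(2) using hc kc assms(2) by (simp add: gs)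
      moreover have "h \<otimes> inv k \<in> K" by (rule subgroup.m_closed[OF assms(1) h(1) subgroup.m_inv_closed[OF assms(1) k(1)]])
      ultimately show "z \<in> conj_orbit G K y" using orbitI[of "h \<otimes> inv k" K y] by simp
    qed
  qed
qed
end

context group begin

lemma comm_central:
  assumes u: "u \<in> carrier G" and v: "v \<in> carrier G" and a: "a \<in> carrier G" and b: "b \<in> carrier G"
    and e1: "a \<otimes> v = v \<otimes> a" and e2: "b \<otimes> u = u \<otimes> b"
    and e3: "(a \<otimes> b \<otimes> inv a \<otimes> inv b) \<otimes> u = u \<otimes> (a \<otimes> b \<otimes> inv a \<otimes> inv b)"
    and e4: "(a \<otimes> b \<otimes> inv a \<otimes> inv b) \<otimes> v = v \<otimes> (a \<otimes> b \<otimes> inv a \<otimes> inv b)"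
    and e5: "u \<otimes> v = v \<otimes> u"
  shows "(u \<otimes> a) \<otimes> (v \<otimes> b) \<otimes> inv (u \<otimes> a) \<otimes> inv (v \<otimes> b) = a \<otimes> b \<otimes> inv a \<otimes> inv b"
proof -
  define P where "P = a \<otimes> b \<otimes> inv a \<otimes> inv b"
  have Pc: "P \<in> carrier G" unfolding P_def using a b by simp
  have "(u \<otimes> a) \<otimes> (v \<otimes> b) \<otimes> inv (u \<otimes> a) \<otimes> inv (v \<otimes> b)
      = u \<otimes> (a \<otimes> v) \<otimes> b \<otimes> inv a \<otimes> inv (b \<otimes> u) \<otimes> inv v" using u v a b by (simp add: gs)
  also have "\<dots> = u \<otimes> (v \<otimes> a) \<otimes> b \<otimes> inv a \<otimes> inv (u \<otimes> b) \<otimes> inv v" by (simp only: e1 e2)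
  also have "\<dots> = (u \<otimes> v) \<otimes> P \<otimes> inv (v \<otimes> u)" unfolding P_def using u v a b by (simp add: gs)
  also have "\<dots> = (u \<otimes> v) \<otimes> P \<otimes> inv (u \<otimes> v)" by (simp only: e5)
  also have "(u \<otimes> v) \<otimes> P = P \<otimes> (u \<otimes> v)"
  proof -
    have "(u \<otimes> v) \<otimes> P = u \<otimes> (v \<otimes> P)" using u v Pc by (simp add: m_assoc)
    also have "\<dots> = u \<otimes> (P \<otimes> v)" using e4 unfolding P_def by simp
    also have "\<dots> = (u \<otimes> P) \<otimes> v" using u v Pc by (simp add: m_assoc)
    also have "\<dots> = (P \<otimes> u) \<otimes> v" using e3 unfolding P_def by simp
    also have "\<dots> = P \<otimes> (u \<otimes> v)" using u v Pc by (simp add: m_assoc)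
    finally show ?thesis .
  qed
  also have "P \<otimes> (u \<otimes> v) \<otimes> inv (u \<otimes> v) = P" using u v Pc by (simp add: m_assoc)
  finally show ?thesis unfolding P_def .
qed

lemma D_conj:
  assumes sub: "subgroup M G" and xc: "x \<in> carrier G"
    and mM: "m' \<in> M" and d: "d \<in> generate G {m \<otimes> x \<otimes> inv m \<otimes> inv x | m. m \<in> M}"
  shows "m' \<otimes> d \<otimes> inv m' \<in> generate G {m \<otimes> x \<otimes> inv m \<otimes> inv x | m. m \<in> M}"
proof -
  let ?C = "{m \<otimes> x \<otimes> inv m \<otimes> inv x | m. m \<in> M}"
  have mc: "m' \<in> carrier G" by (rule subgroup.mem_carrier[OF sub mM])
  have Cc: "?C \<subseteq> carrier G" using subgroup.mem_carrier[OF sub] xc by auto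
  have inc: "m' \<otimes> h \<otimes> inv m' \<in> generate G ?C" if h: "h \<in> ?C" for h
  proof -
    obtain m where m: "m \<in> M" "h = m \<otimes> x \<otimes> inv m \<otimes> inv x" using h by blast
    have mc2: "m \<in> carrier G" by (rule subgroup.mem_carrier[OF sub m(1)])
    have "m' \<otimes> h \<otimes> inv m' = ((m' \<otimes> m) \<otimes> x \<otimes> inv (m' \<otimes> m) \<otimes> inv x) \<otimes> inv (m' \<otimes> x \<otimes> inv m' \<otimes> inv x)"
      unfolding m(2) using mc mc2 xc by (simp add: gs)
    moreover have g1: "(m' \<otimes> m) \<otimes> x \<otimes> inv (m' \<otimes> m) \<otimes> inv x \<in> generate G ?C"
      using subgroup.m_closed[OF sub mM m(1)] by (intro generate.incl) blast
    moreover have g2: "inv (m' \<otimes> x \<otimes> inv m' \<otimes> inv x) \<in> generate G ?C"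
      using mM by (intro generate.inv) blast
    ultimately show ?thesis using generate.eng[OF g1 g2] by simp
  qed
  from d show ?thesis
  proof (induction rule: generate.induct)
    case one
    then show ?case using mc by (simp add: generate.one)
  next
    case (incl h)
    then show ?case by (rule inc)
  next
    case (inv h)
    have hc: "h \<in> carrier G" using inv Cc by auto
    have "m' \<otimes> inv h \<otimes> inv m' = inv (m' \<otimes> h \<otimes> inv m')" using hc mc by (simp add: gs)
    then show ?case using generate_m_inv_closed[OF Cc inc[OF inv]] by simp
  next
    case (eng h1 h2)
    have h1c: "h1 \<in> carrier G" using generate_in_carrier[OF Cc eng(1)] .
    have h2c: "h2 \<in> carrier G" using generate_in_carrier[OF Cc eng(2)] .
    have "m' \<otimes> (h1 \<otimes> h2) \<otimes> inv m' = (m' \<otimes> h1 \<otimes> inv m') \<otimes> (m' \<otimes> h2 \<otimes> inv m')"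
      using h1c h2c mc by (simp add: gs)
    then show ?case using generate.eng[OF eng(3) eng(4)] by simp
  qed
qed


lemma key:
  assumes qs: "quasi_simple G M" and xc: "x \<in> carrier G"
    and xn: "\<And>m. m \<in> M \<Longrightarrow> x \<otimes> m \<otimes> inv x \<in> M"
    and nc: "x \<notin> centralizer G M"
  shows "M \<subseteq> generate G {m \<otimes> x \<otimes> inv m \<otimes> inv x | m. m \<in> M}"
proof -
  let ?C = "{m \<otimes> x \<otimes> inv m \<otimes> inv x | m. m \<in> M}"
  define D where "D = generate G ?C"
  define Z where "Z = subgroup_center G M"
  define Mg where "Mg = G\<lparr>carrier := M\<rparr>"
  have sub: "subgroup M G" and der: "derived G M = M"
    and sg: "simple_group (Mg Mod Z)"
    using qs unfolding quasi_simple_def Mg_def Z_def by auto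
  have MG: "M \<subseteq> carrier G" by (rule subgroup.subset[OF sub])
  have mc: "\<And>m. m \<in> M \<Longrightarrow> m \<in> carrier G" by (rule subgroup.mem_carrier[OF sub])
  have Cc: "?C \<subseteq> carrier G" using mc xc by auto
  have CM: "?C \<subseteq> M"
  proof
    fix c assume "c \<in> ?C"
    then obtain m where m: "m \<in> M" "c = m \<otimes> x \<otimes> inv m \<otimes> inv x" by blast
    have "c = m \<otimes> (x \<otimes> inv m \<otimes> inv x)" using m(2) mc[OF m(1)] xc by (simp add: m_assoc)
    thus "c \<in> M" using subgroup.m_closed[OF sub m(1) xn[OF subgroup.m_inv_closed[OF sub m(1)]]] by simp
  qed
  have Dsub: "subgroup D G" unfolding D_def by (rule generate_is_subgroup[OF Cc])
  have DM: "D \<subseteq> M" unfolding D_def by (rule generate_subgroup_incl[OF CM sub])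
  have Zdef: "Z = M \<inter> centralizer G M" unfolding Z_def subgroup_center_def centralizer_def using MG by auto
  have Zsub: "subgroup Z G" unfolding Zdef by (rule subgroups_Inter_pair[OF sub centralizer_subgroup[OF MG]])
  have ZM: "Z \<subseteq> M" unfolding Zdef by auto
  have Zc: "\<And>z m. z \<in> Z \<Longrightarrow> m \<in> M \<Longrightarrow> z \<otimes> m = m \<otimes> z" unfolding Z_def subgroup_center_def by auto
  have gMg: "group Mg" unfolding Mg_def by (rule subgroup_imp_group[OF sub])
  have cMg: "carrier Mg = M" unfolding Mg_def by simp
  have mMg: "\<And>a b. a \<otimes>\<^bsub>Mg\<^esub> b = a \<otimes> b" unfolding Mg_def by simp
  have iMg: "\<And>a. a \<in> M \<Longrightarrow> inv\<^bsub>Mg\<^esub> a = inv a" unfolding Mg_def using sub by simp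
  have rcMg: "\<And>a. r_coset Mg Z a = Z #> a" unfolding r_coset_def mMg by simp
  have Znorm: "Z \<lhd> Mg"
  proof -
    have "subgroup Z Mg" unfolding Mg_def by (rule subgroup_incl[OF Zsub sub ZM])
    moreover have "\<forall>y\<in>carrier Mg. \<forall>h\<in>Z. y \<otimes>\<^bsub>Mg\<^esub> h \<otimes>\<^bsub>Mg\<^esub> inv\<^bsub>Mg\<^esub> y \<in> Z"
    proof (intro ballI)
      fix y h assume y: "y \<in> carrier Mg" and h: "h \<in> Z"
      have yM: "y \<in> M" using y cMg by simp
      have hM: "h \<in> M" using h ZM by auto
      have "y \<otimes>\<^bsub>Mg\<^esub> h \<otimes>\<^bsub>Mg\<^esub> inv\<^bsub>Mg\<^esub> y = h \<otimes> y \<otimes> inv y"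
        using Zc[OF h yM] by (simp add: mMg iMg[OF yM])
      also have "\<dots> = h" using mc[OF yM] mc[OF hM] by (simp add: m_assoc)
      finally show "y \<otimes>\<^bsub>Mg\<^esub> h \<otimes>\<^bsub>Mg\<^esub> inv\<^bsub>Mg\<^esub> y \<in> Z" using h by simp
    qed
    ultimately show ?thesis using group.normal_inv_iff[OF gMg] by blast
  qed
  have Dnorm: "D \<lhd> Mg"
  proof -
    have "subgroup D Mg" unfolding Mg_def by (rule subgroup_incl[OF Dsub sub DM])
    moreover have "\<forall>y\<in>carrier Mg. \<forall>h\<in>D. y \<otimes>\<^bsub>Mg\<^esub> h \<otimes>\<^bsub>Mg\<^esub> inv\<^bsub>Mg\<^esub> y \<in> D"
    proof (intro ballI)
      fix y h assume y: "y \<in> carrier Mg" and h: "h \<in> D"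
      have yM: "y \<in> M" using y cMg by simp
      show "y \<otimes>\<^bsub>Mg\<^esub> h \<otimes>\<^bsub>Mg\<^esub> inv\<^bsub>Mg\<^esub> y \<in> D"
        using D_conj[OF sub xc yM h[unfolded D_def]] unfolding D_def by (simp add: mMg iMg[OF yM])
    qed
    ultimately show ?thesis using group.normal_inv_iff[OF gMg] by blast
  qed
  define \<phi> where "\<phi> = (\<lambda>a. r_coset Mg Z a)"
  have hom: "group_hom Mg (Mg Mod Z) \<phi>"
    unfolding group_hom_def group_hom_axioms_def \<phi>_def
    using gMg normal.factorgroup_is_group[OF Znorm] normal.r_coset_hom_Mod[OF Znorm] by blast
  have surj: "\<phi> ` carrier Mg = carrier (Mg Mod Z)" unfolding \<phi>_def carrier_FactGroup by simp
  have "\<phi> ` D \<lhd> Mg Mod Z" by (rule normal.surj_hom_normal_subgroup[OF Dnorm hom surj])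
  hence cases: "\<phi> ` D = carrier (Mg Mod Z) \<or> \<phi> ` D = {Z}"
    using simple_group.no_real_normal_subgroup[OF sg] by simp
  have one_in: "\<And>a. a \<in> carrier G \<Longrightarrow> a \<in> Z #> a"
    unfolding r_coset_def using subgroup.one_closed[OF Zsub] by force
  have comm_Z: "(u \<otimes> a) \<otimes> (v \<otimes> b) \<otimes> inv (u \<otimes> a) \<otimes> inv (v \<otimes> b) = a \<otimes> b \<otimes> inv a \<otimes> inv b"
    if "u \<in> Z" "v \<in> Z" "a \<in> M" "b \<in> M" for u v a b
  proof (rule comm_central)
    have uM: "u \<in> M" "v \<in> M" using that ZM by auto
    have PM: "a \<otimes> b \<otimes> inv a \<otimes> inv b \<in> M"
      using that(3,4) sub by (simp add: subgroup.m_closed subgroup.m_inv_closed)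
    show "u \<in> carrier G" "v \<in> carrier G" "a \<in> carrier G" "b \<in> carrier G"
      using mc uM that by auto
    show "a \<otimes> v = v \<otimes> a" using Zc[OF that(2) that(3)] by simp
    show "b \<otimes> u = u \<otimes> b" using Zc[OF that(1) that(4)] by simp
    show "a \<otimes> b \<otimes> inv a \<otimes> inv b \<otimes> u = u \<otimes> (a \<otimes> b \<otimes> inv a \<otimes> inv b)" using Zc[OF that(1) PM] by simp
    show "a \<otimes> b \<otimes> inv a \<otimes> inv b \<otimes> v = v \<otimes> (a \<otimes> b \<otimes> inv a \<otimes> inv b)" using Zc[OF that(2) PM] by simp
    show "u \<otimes> v = v \<otimes> u" using Zc[OF that(1) uM(2)] by simp
  qed
  have derD: "M \<subseteq> K" if Ksub: "subgroup K G" and dK: "derived_set G M \<subseteq> K" for K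
  proof -
    have "generate G (derived_set G M) \<subseteq> K" by (rule generate_subgroup_incl[OF dK Ksub])
    thus ?thesis using der unfolding derived_def by simp
  qed
  from cases show ?thesis
  proof
    assume full: "\<phi> ` D = carrier (Mg Mod Z)"
    have dec: "\<exists>z\<in>Z. \<exists>d\<in>D. m = z \<otimes> d" if mM: "m \<in> M" for m
    proof -
      have "\<phi> m \<in> carrier (Mg Mod Z)" using surj mM cMg by blast
      then obtain d where d: "d \<in> D" "\<phi> d = \<phi> m" using full by (metis imageE)
      have "m \<in> Z #> d" using one_in[OF mc[OF mM]] d(2) unfolding \<phi>_def rcMg by simp
      thus ?thesis using d(1) unfolding r_coset_def by blast
    qed
    have "derived_set G M \<subseteq> D"
    proof clarify
      fix a b assume ab: "a \<in> M" "b \<in> M"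
      obtain u d1 where ud: "u \<in> Z" "d1 \<in> D" "a = u \<otimes> d1" using dec[OF ab(1)] by blast
      obtain v d2 where vd: "v \<in> Z" "d2 \<in> D" "b = v \<otimes> d2" using dec[OF ab(2)] by blast
      have "a \<otimes> b \<otimes> inv a \<otimes> inv b = d1 \<otimes> d2 \<otimes> inv d1 \<otimes> inv d2"
        unfolding ud(3) vd(3) using comm_Z[OF ud(1) vd(1)] ud(2) vd(2) DM by blast
      moreover have "d1 \<otimes> d2 \<otimes> inv d1 \<otimes> inv d2 \<in> D"
        using ud(2) vd(2) Dsub by (simp add: subgroup.m_closed subgroup.m_inv_closed)
      ultimately show "a \<otimes> b \<otimes> inv a \<otimes> inv b \<in> D" by simp
    qed
    thus ?thesis using derD[OF Dsub] unfolding D_def by blast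
  next
    assume triv: "\<phi> ` D = {Z}"
    have DZ: "D \<subseteq> Z"
    proof
      fix d assume d: "d \<in> D"
      have "Z #> d = Z" using triv d unfolding \<phi>_def rcMg by blast
      thus "d \<in> Z" using one_in[OF mc[OF subsetD[OF DM d]]] by simp
    qed
    have cZ: "m \<otimes> x \<otimes> inv m \<otimes> inv x \<in> Z" if "m \<in> M" for m
      using DZ that unfolding D_def by (blast intro: generate.incl)
    define F where "F = M \<inter> centralizer G {x}"
    have Fsub: "subgroup F G" unfolding F_def using xc
      by (intro subgroups_Inter_pair[OF sub centralizer_subgroup]) simp
    have sig: "x \<otimes> a \<otimes> inv x = inv (a \<otimes> x \<otimes> inv a \<otimes> inv x) \<otimes> a" if "a \<in> M" for a
      using mc[OF that] xc by (simp add: gs)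
    have "derived_set G M \<subseteq> F"
    proof clarify
      fix a b assume ab: "a \<in> M" "b \<in> M"
      have ac: "a \<in> carrier G" and bc: "b \<in> carrier G" using mc ab by auto
      let ?k = "a \<otimes> b \<otimes> inv a \<otimes> inv b"
      have kM: "?k \<in> M" using ab sub by (simp add: subgroup.m_closed subgroup.m_inv_closed)
      have "x \<otimes> ?k \<otimes> inv x = (x \<otimes> a \<otimes> inv x) \<otimes> (x \<otimes> b \<otimes> inv x) \<otimes> inv (x \<otimes> a \<otimes> inv x) \<otimes> inv (x \<otimes> b \<otimes> inv x)"
        using ac bc xc by (simp add: gs)
      also have "\<dots> = (inv (a \<otimes> x \<otimes> inv a \<otimes> inv x) \<otimes> a) \<otimes> (inv (b \<otimes> x \<otimes> inv b \<otimes> inv x) \<otimes> b) \<otimes> inv (inv (a \<otimes> x \<otimes> inv a \<otimes> inv x) \<otimes> a) \<otimes> inv (inv (b \<otimes> x \<otimes> inv b \<otimes> inv x) \<otimes> b)"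
        by (simp only: sig[OF ab(1)] sig[OF ab(2)])
      also have "\<dots> = ?k"
        by (rule comm_Z[OF subgroup.m_inv_closed[OF Zsub cZ[OF ab(1)]] subgroup.m_inv_closed[OF Zsub cZ[OF ab(2)]] ab])
      finally have e: "x \<otimes> ?k \<otimes> inv x = ?k" .
      have kc: "?k \<in> carrier G" using mc[OF kM] .
      have "?k \<otimes> x = x \<otimes> ?k \<otimes> inv x \<otimes> x" using e by simp
      also have "\<dots> = x \<otimes> ?k" using kc xc by (simp add: m_assoc)
      finally have "?k \<otimes> x = x \<otimes> ?k" .
      thus "?k \<in> F" unfolding F_def centralizer_def using kM kc by simp
    qed
    hence "M \<subseteq> F" by (rule derD[OF Fsub])
    hence "x \<in> centralizer G M" unfolding F_def centralizer_def using xc by auto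
    with nc show ?thesis by simp
  qed
qed


lemma key2:
  assumes qs: "quasi_simple G M" and xc: "x \<in> carrier G"
    and xn: "\<And>m. m \<in> M \<Longrightarrow> x \<otimes> m \<otimes> inv x \<in> M"
    and nc: "x \<notin> centralizer G M" and fin: "finite (carrier G)"
  shows "M \<subseteq> generate G (conj_orbit G M x)" "2 < card (conj_orbit G M x)"
proof -
  let ?C = "{m \<otimes> x \<otimes> inv m \<otimes> inv x | m. m \<in> M}"
  let ?O = "conj_orbit G M x"
  have sub: "subgroup M G" using qs unfolding quasi_simple_def by auto
  have MG: "M \<subseteq> carrier G" by (rule subgroup.subset[OF sub])
  have mc: "\<And>m. m \<in> M \<Longrightarrow> m \<in> carrier G" by (rule subgroup.mem_carrier[OF sub])
  have Cc: "?C \<subseteq> carrier G" using mc xc by auto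
  have Oc: "?O \<subseteq> carrier G" by (rule orbit_sub[OF MG xc])
  have xO: "x \<in> ?O" by (rule orbit_self[OF sub xc])
  have MC: "M \<subseteq> generate G ?C" by (rule key[OF qs xc xn nc])
  have cform: "m \<otimes> x \<otimes> inv m \<otimes> inv x = (m \<otimes> x \<otimes> inv m) \<otimes> inv x" for m by simp
  have CO: "?C \<subseteq> generate G ?O"
  proof
    fix c assume "c \<in> ?C"
    then obtain m where m: "m \<in> M" "c = m \<otimes> x \<otimes> inv m \<otimes> inv x" by blast
    have "m \<otimes> x \<otimes> inv m \<in> generate G ?O" using orbitI[OF m(1)] by (rule generate.incl)
    moreover have "inv x \<in> generate G ?O" using xO by (rule generate.inv)
    ultimately show "c \<in> generate G ?O" unfolding m(2) by (rule generate.eng)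
  qed
  have "generate G ?C \<subseteq> generate G ?O"
    by (rule generate_subgroup_incl[OF CO generate_is_subgroup[OF Oc]])
  thus "M \<subseteq> generate G ?O" using MC by blast
  show "2 < card ?O"
  proof (rule ccontr)
    assume "\<not> 2 < card ?O"
    hence c2: "card ?O \<le> 2" by simp
    have finO: "finite ?O" using fin Oc finite_subset by blast
    have "\<exists>x'. ?O \<subseteq> {x, x'}"
    proof (rule ccontr)
      assume "\<not> ?thesis"
      then obtain y where y: "y \<in> ?O" "y \<noteq> x" by blast
      with \<open>\<not> ?thesis\<close> obtain z where z: "z \<in> ?O" "z \<noteq> x" "z \<noteq> y" by blast
      have "{x, y, z} \<subseteq> ?O" using xO y z by auto
      hence "card {x, y, z} \<le> card ?O" using finO by (rule card_mono[rotated])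
      moreover have "card {x, y, z} = 3" using y z by auto
      ultimately show False using c2 by simp
    qed
    then obtain x' where x': "?O \<subseteq> {x, x'}" by blast
    have Cv: "c = \<one> \<or> c = x' \<otimes> inv x" if "c \<in> ?C" for c
    proof -
      obtain m where m: "m \<in> M" "c = m \<otimes> x \<otimes> inv m \<otimes> inv x" using \<open>c \<in> ?C\<close> by blast
      have "m \<otimes> x \<otimes> inv m \<in> {x, x'}" using orbitI[OF m(1), of x] x' by blast
      thus ?thesis unfolding m(2) using xc by auto
    qed
    have "\<forall>a\<in>?C. \<forall>b\<in>?C. a \<otimes> b = b \<otimes> a"
    proof (intro ballI)
      fix a b assume ab: "a \<in> ?C" "b \<in> ?C"
      have "a \<in> carrier G" "b \<in> carrier G" using ab Cc by auto
      thus "a \<otimes> b = b \<otimes> a" using Cv[OF ab(1)] Cv[OF ab(2)] by auto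
    qed
    hence "\<forall>a\<in>generate G ?C. \<forall>b\<in>generate G ?C. a \<otimes> b = b \<otimes> a"
      by (rule generate_centralizer[OF Cc Cc])
    hence "\<forall>a\<in>M. \<forall>b\<in>M. a \<otimes> b = b \<otimes> a" using MC by blast
    thus False using qs_nonab[OF qs] by blast
  qed
qed

end


theorem mainTheorem2:
  fixes G (structure) and M T :: "'a set" and r :: 'a
  assumes "group G" and "finite (carrier G)"
    and "subgroup M G"
    and "subgroup T G" and "T \<subseteq> normalizer G M"
    and "\<forall>x \<in> T. \<forall>y \<in> T. x \<otimes> y = y \<otimes> x"
    and "r \<in> T"
    and q: "quasi_simple G M"
    and n: "r \<notin> centralizer G M"
    and w: "(conj_orbit G (carrier G) r \<inter> T) - ((conj_orbit G M r \<inter> T) \<union> centralizer G M) \<noteq> {}"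
  shows "type_C G (conj_orbit G (carrier G) r)"
proof -
  interpret group G by (rule assms(1))
  note sub = assms(3) and Tsub = assms(4) and TN = assms(5) and Tc = assms(6) and rT = assms(7)
  have MG: "M \<subseteq> carrier G" by (rule subgroup.subset[OF sub])
  have mc: "\<And>m. m \<in> M \<Longrightarrow> m \<in> carrier G" by (rule subgroup.mem_carrier[OF sub])
  have tc: "\<And>t. t \<in> T \<Longrightarrow> t \<in> carrier G" by (rule subgroup.mem_carrier[OF Tsub])
  have tn: "\<And>t m. t \<in> T \<Longrightarrow> m \<in> M \<Longrightarrow> t \<otimes> m \<otimes> inv t \<in> M"
    using norm_conj[OF MG] TN by blast
  obtain s where sO: "s \<in> conj_orbit G (carrier G) r" and sT: "s \<in> T"
    and sn: "s \<notin> conj_orbit G M r" and snc: "s \<notin> centralizer G M" using w by blast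
  have rc: "r \<in> carrier G" by (rule tc[OF rT])
  have sc: "s \<in> carrier G" by (rule tc[OF sT])
  define Or where "Or = conj_orbit G M r"
  define Os where "Os = conj_orbit G M s"
  define H where "H = generate G (Or \<union> Os)"
  have Orc: "Or \<subseteq> carrier G" unfolding Or_def by (rule orbit_sub[OF MG rc])
  have Osc: "Os \<subseteq> carrier G" unfolding Os_def by (rule orbit_sub[OF MG sc])
  have Hsub: "subgroup H G" unfolding H_def using Orc Osc by (intro generate_is_subgroup) simp
  have kr: "M \<subseteq> generate G Or" "2 < card Or"
    unfolding Or_def using key2[OF q rc tn[OF rT] n assms(2)] by auto
  have ks: "M \<subseteq> generate G Os" "2 < card Os"
    unfolding Os_def using key2[OF q sc tn[OF sT] snc assms(2)] by auto
  have MH: "M \<subseteq> H" unfolding H_def using kr(1) mono_generate[of Or "Or \<union> Os"] by blast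
  define P where "P = {h. \<exists>m\<in>M. \<exists>t\<in>T. h = m \<otimes> t}"
  have Psub: "subgroup P G"
  proof (rule subgroupI)
    show "P \<subseteq> carrier G" unfolding P_def using mc tc by auto
    show "P \<noteq> {}" unfolding P_def using subgroup.one_closed[OF sub] subgroup.one_closed[OF Tsub] by force
  next
    fix a assume "a \<in> P"
    then obtain m t where mt: "m \<in> M" "t \<in> T" "a = m \<otimes> t" unfolding P_def by blast
    have it: "inv t \<in> T" by (rule subgroup.m_inv_closed[OF Tsub mt(2)])
    have "inv a = (inv t \<otimes> inv m \<otimes> inv (inv t)) \<otimes> inv t"
      unfolding mt(3) using mc[OF mt(1)] tc[OF mt(2)] by (simp add: gs)
    moreover have "inv t \<otimes> inv m \<otimes> inv (inv t) \<in> M"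
      by (rule tn[OF it subgroup.m_inv_closed[OF sub mt(1)]])
    ultimately show "inv a \<in> P" unfolding P_def using it by blast
  next
    fix a b assume "a \<in> P" "b \<in> P"
    then obtain m1 t1 m2 t2 where mt: "m1 \<in> M" "t1 \<in> T" "a = m1 \<otimes> t1" "m2 \<in> M" "t2 \<in> T" "b = m2 \<otimes> t2"
      unfolding P_def by blast
    have "a \<otimes> b = (m1 \<otimes> (t1 \<otimes> m2 \<otimes> inv t1)) \<otimes> (t1 \<otimes> t2)"
      unfolding mt(3,6) using mc[OF mt(1)] tc[OF mt(2)] mc[OF mt(4)] tc[OF mt(5)] by (simp add: gs)
    moreover have "m1 \<otimes> (t1 \<otimes> m2 \<otimes> inv t1) \<in> M"
      by (rule subgroup.m_closed[OF sub mt(1) tn[OF mt(2) mt(4)]])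
    moreover have "t1 \<otimes> t2 \<in> T" by (rule subgroup.m_closed[OF Tsub mt(2) mt(5)])
    ultimately show "a \<otimes> b \<in> P" unfolding P_def by blast
  qed
  have OP: "conj_orbit G M y \<subseteq> P" if yT: "y \<in> T" for y
  proof
    fix z assume "z \<in> conj_orbit G M y"
    then obtain m where m: "m \<in> M" "z = m \<otimes> y \<otimes> inv m" by (rule orbitE)
    have "z = (m \<otimes> (y \<otimes> inv m \<otimes> inv y)) \<otimes> y"
      unfolding m(2) using mc[OF m(1)] tc[OF yT] by (simp add: gs)
    moreover have "y \<otimes> inv m \<otimes> inv y \<in> M" by (rule tn[OF yT subgroup.m_inv_closed[OF sub m(1)]])
    ultimately show "z \<in> P" unfolding P_def using m(1) yT subgroup.m_closed[OF sub] by blast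
  qed
  have HP: "H \<subseteq> P" unfolding H_def Or_def Os_def
    using OP[OF rT] OP[OF sT] by (intro generate_subgroup_incl[OF _ Psub]) simp
  have orbH: "conj_orbit G H y = conj_orbit G M y" if yT: "y \<in> T" for y
  proof
    show "conj_orbit G M y \<subseteq> conj_orbit G H y" using MH unfolding conj_orbit_def by blast
    show "conj_orbit G H y \<subseteq> conj_orbit G M y"
    proof
      fix z assume "z \<in> conj_orbit G H y"
      then obtain h where h: "h \<in> H" "z = h \<otimes> y \<otimes> inv h" by (rule orbitE)
      obtain m t where mt: "m \<in> M" "t \<in> T" "h = m \<otimes> t" using HP h(1) unfolding P_def by blast
      have mC: "m \<in> carrier G" "t \<in> carrier G" "y \<in> carrier G" using mc[OF mt(1)] tc[OF mt(2)] tc[OF yT] by auto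
      have ty: "t \<otimes> y = y \<otimes> t" using Tc mt(2) yT by blast
      have "z = m \<otimes> (t \<otimes> y) \<otimes> inv t \<otimes> inv m" unfolding h(2) mt(3) using mC by (simp add: gs)
      also have "\<dots> = m \<otimes> (y \<otimes> t) \<otimes> inv t \<otimes> inv m" by (simp only: ty)
      also have "\<dots> = m \<otimes> y \<otimes> inv m" using mC by (simp add: gs)
      finally show "z \<in> conj_orbit G M y" using orbitI[OF mt(1), of y] by simp
    qed
  qed
  have HOr: "conj_orbit G H r = Or" unfolding Or_def by (rule orbH[OF rT])
  have HOs: "conj_orbit G H s = Os" unfolding Os_def by (rule orbH[OF sT])
  obtain r' s' where r': "r' \<in> Or" and s': "s' \<in> Os" and nc: "r' \<otimes> s' \<noteq> s' \<otimes> r'"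
  proof -
    have "\<not> (\<forall>a\<in>Or. \<forall>b\<in>Os. a \<otimes> b = b \<otimes> a)"
    proof
      assume "\<forall>a\<in>Or. \<forall>b\<in>Os. a \<otimes> b = b \<otimes> a"
      hence "\<forall>a\<in>generate G Or. \<forall>b\<in>generate G Os. a \<otimes> b = b \<otimes> a"
        by (rule generate_centralizer[OF Orc Osc])
      hence "\<forall>a\<in>M. \<forall>b\<in>M. a \<otimes> b = b \<otimes> a" using kr(1) ks(1) by blast
      thus False using qs_nonab[OF q] by blast
    qed
    thus ?thesis using that by blast
  qed
  have r'H: "r' \<in> conj_orbit G H r" using r' HOr by simp
  have s'H: "s' \<in> conj_orbit G H s" using s' HOs by simp
  have Or': "conj_orbit G H r' = Or" using orbit_conj[OF Hsub rc r'H] HOr by simp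
  have Os': "conj_orbit G H s' = Os" using orbit_conj[OF Hsub sc s'H] HOs by simp
  have OG: "conj_orbit G (carrier G) s = conj_orbit G (carrier G) r"
    by (rule orbit_conj[OF subgroup_self rc sO])
  have r'G: "r' \<in> conj_orbit G (carrier G) r" using r' MG unfolding Or_def conj_orbit_def by blast
  have s'G: "s' \<in> conj_orbit G (carrier G) r" using s' MG OG unfolding Os_def conj_orbit_def by blast
  have r'inH: "r' \<in> H" unfolding H_def using r' by (intro generate.incl) simp
  have s'inH: "s' \<in> H" unfolding H_def using s' by (intro generate.incl) simp
  have neq: "Or \<noteq> Os" using orbit_self[OF sub sc] sn unfolding Os_def Or_def by blast
  show ?thesis unfolding type_C_def
  proof (intro exI conjI)
    show "subgroup H G" by (rule Hsub)
    show "r' \<in> H \<inter> conj_orbit G (carrier G) r" using r'inH r'G by simp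
    show "s' \<in> H \<inter> conj_orbit G (carrier G) r" using s'inH s'G by simp
    show "r' \<otimes> s' \<noteq> s' \<otimes> r'" by (rule nc)
    show "H = generate G (conj_orbit G H r' \<union> conj_orbit G H s')" by (subst Or', subst Os') (simp add: H_def)
    show "conj_orbit G H r' \<noteq> conj_orbit G H s'" unfolding Or' Os' by (rule neq)
    show "2 < min (card (conj_orbit G H r')) (card (conj_orbit G H s')) \<or>
          4 < max (card (conj_orbit G H r')) (card (conj_orbit G H s'))"
      unfolding Or' Os' using kr(2) ks(2) by simp
  qed
qed

end
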